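(* Let $\ell, c \in \mathbb{N}$. For any directed graphs $G$ and $H$ with nodes $u$ and $v$ respectively, the following holds: $G,u \equiv_{\text{C}^2_{\ell, c}} H,v$ if and only if $W^\ell_c(u) = W^\ell_c(v)$.
   Context: A directed graph of dimension $d$ is $G=(V,E,\lambda)$ with finite node set $V$, edge set $E \subseteq V\times V$ without loops $(v,v)$, and labelling $\lambda: V \to \{0,1\}^d$. The in-neighbourhood $\overleftarrow{N}_G(v)$ is the set of $w$ with $(w,v)\in E$, the out-neighbourhood $\overrightarrow{N}_G(v)$ is the set of $w$ with $(v,w)\in E$, and $N_G(v)=\overleftarrow{N}_G(v)\cup\overrightarrow{N}_G(v)$. Graphs are viewed as first-order structures with unary predicates $P_1,\dots,P_d$ ($P_i$ holds at $v$ iff $\lambda(v)_i=1$) and binary predicate $E$. $\text{C}^2$ is the two-variable fragment of first-order logic with equality extended by counting quantifiers $\exists_k$ ("there exist at least $k$ distinct elements such that"). $\text{C}^2_{\ell,c}$ is the set of $\text{C}^2$ formulas of quantifier depth at most $\ell$ in which every counting quantifier $\exists_k$ has $k \le c$. $G,u \equiv_{\text{C}^2_{\ell,c}} H,v$ means that for every $\text{C}^2_{\ell,c}$ formula $\varphi(x)$ with one free variable, $G\models\varphi(u)$ iff $H\models\varphi(v)$. For a multiset $M$, the $c$-bounded multiset $\{\!\{\cdot\}\!\}^c$ is obtained by reducing every multiplicity to at most $c$ (e.g. $\{\!\{7,7,7,3\}\!\}^2=\{\!\{7,7,3\}\!\}$). The $c$-bounded WL algorithm computes, for all nodes $v$ of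 a graph $G$: $W^0_c(v)=\lambda(v)$ and $W^{\ell+1}_c(v) = \big( W^\ell_c(v),\ \{\!\{ W^\ell_c(w) \}\!\}^c_{w \in \overleftarrow{N}_G(v) \cap \overrightarrow{N}_G(v)},\ \{\!\{ W^\ell_c(w) \}\!\}^c_{w \in \overleftarrow{N}_G(v) \setminus \overrightarrow{N}_G(v)},\ \{\!\{ W^\ell_c(w) \}\!\}^c_{w \in \overrightarrow{N}_G(v) \setminus \overleftarrow{N}_G(v)},\ \{\!\{ W^\ell_c(w) \}\!\}^c_{w \in V \setminus (N_G(v) \cup \{v\})} \big)$. *)

theory Defs
  imports Main "HOL-Library.Multiset"
begin

record 'v digraph =
  nodes :: "'v set"
  edges :: "('v \<times> 'v) set"
  lab   :: "'v \<Rightarrow> bool list"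

text \<open>A directed graph of dimension d: finite node set, loop-free edges between nodes,
  labels in {0,1}^d (bool lists of length d; entry i is predicate P_(i+1)).\<close>
definition digraph_dim :: "nat \<Rightarrow> 'v digraph \<Rightarrow> bool" where
  "digraph_dim d G \<longleftrightarrow> finite (nodes G) \<and> edges G \<subseteq> nodes G \<times> nodes G
     \<and> (\<forall>v. (v, v) \<notin> edges G) \<and> (\<forall>v\<in>nodes G. length (lab G v) = d)"

definition in_nbhd :: "'v digraph \<Rightarrow> 'v \<Rightarrow> 'v set" where
  "in_nbhd G v = {w. (w, v) \<in> edges G}"

definition out_nbhd :: "'v digraph \<Rightarrow> 'v \<Rightarrow> 'v set" where
  "out_nbhd G v = {w. (v, w) \<in> edges G}"

definition nbhd :: "'v digraph \<Rightarrow> 'v \<Rightarrow> 'v set" where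
  "nbhd G v = in_nbhd G v \<union> out_nbhd G v"

datatype var = X | Y

datatype fo =
    Pred nat var            (* Pred i z : P_(i+1)(z), 0-based index i *)
  | Edge var var
  | Eq var var
  | Neg fo
  | Conj fo fo
  | ExC nat var fo          (* ExC k z phi : exists at least k distinct z with phi *)

fun free :: "fo \<Rightarrow> var set" where
  "free (Pred i z) = {z}"
| "free (Edge z z') = {z, z'}"
| "free (Eq z z') = {z, z'}"
| "free (Neg \<phi>) = free \<phi>"
| "free (Conj \<phi> \<psi>) = free \<phi> \<union> free \<psi>"
| "free (ExC k z \<phi>) = free \<phi> - {z}"

fun qdepth :: "fo \<Rightarrow> nat" where
  "qdepth (Pred i z) = 0"
| "qdepth (Edge z z') = 0"
| "qdepth (Eq z z') = 0"
| "qdepth (Neg \<phi>) = qdepth \<phi>"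
| "qdepth (Conj \<phi> \<psi>) = max (qdepth \<phi>) (qdepth \<psi>)"
| "qdepth (ExC k z \<phi>) = Suc (qdepth \<phi>)"

fun counts_le :: "nat \<Rightarrow> fo \<Rightarrow> bool" where
  "counts_le c (ExC k z \<phi>) = (k \<le> c \<and> counts_le c \<phi>)"
| "counts_le c (Neg \<phi>) = counts_le c \<phi>"
| "counts_le c (Conj \<phi> \<psi>) = (counts_le c \<phi> \<and> counts_le c \<psi>)"
| "counts_le c _ = True"

fun preds_lt :: "nat \<Rightarrow> fo \<Rightarrow> bool" where
  "preds_lt d (Pred i z) = (i < d)"
| "preds_lt d (ExC k z \<phi>) = preds_lt d \<phi>"
| "preds_lt d (Neg \<phi>) = preds_lt d \<phi>"
| "preds_lt d (Conj \<phi> \<psi>) = (preds_lt d \<phi> \<and> preds_lt d \<psi>)"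
| "preds_lt d _ = True"

definition C2 :: "nat \<Rightarrow> nat \<Rightarrow> nat \<Rightarrow> fo set" where
  "C2 d l c = {\<phi>. preds_lt d \<phi> \<and> qdepth \<phi> \<le> l \<and> counts_le c \<phi>}"

fun sat :: "'v digraph \<Rightarrow> (var \<Rightarrow> 'v) \<Rightarrow> fo \<Rightarrow> bool" where
  "sat G a (Pred i z) = (i < length (lab G (a z)) \<and> lab G (a z) ! i)"
| "sat G a (Edge z z') = ((a z, a z') \<in> edges G)"
| "sat G a (Eq z z') = (a z = a z')"
| "sat G a (Neg \<phi>) = (\<not> sat G a \<phi>)"
| "sat G a (Conj \<phi> \<psi>) = (sat G a \<phi> \<and> sat G a \<psi>)"
| "sat G a (ExC k z \<phi>) = (k \<le> card {w \<in> nodes G. sat G (a(z := w)) \<phi>})"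

definition C2_equiv :: "nat \<Rightarrow> nat \<Rightarrow> nat \<Rightarrow> 'a digraph \<Rightarrow> 'a \<Rightarrow> 'b digraph \<Rightarrow> 'b \<Rightarrow> bool" where
  "C2_equiv d l c G u H v \<longleftrightarrow>
     (\<forall>\<phi> \<in> C2 d l c. free \<phi> \<subseteq> {X} \<longrightarrow> (sat G (\<lambda>_. u) \<phi> \<longleftrightarrow> sat H (\<lambda>_. v) \<phi>))"

definition bound_mset :: "nat \<Rightarrow> 'a multiset \<Rightarrow> 'a multiset" where
  "bound_mset c M = (\<Sum>x\<in>set_mset M. replicate_mset (min c (count M x)) x)"

datatype color = Init "bool list" | Refine color "color multiset" "color multiset" "color multiset" "color multiset"

fun wl :: "nat \<Rightarrow> 'v digraph \<Rightarrow> nat \<Rightarrow> 'v \<Rightarrow> color" where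
  "wl c G 0 v = Init (lab G v)"
| "wl c G (Suc l) v = Refine (wl c G l v)
     (bound_mset c (image_mset (wl c G l) (mset_set (in_nbhd G v \<inter> out_nbhd G v))))
     (bound_mset c (image_mset (wl c G l) (mset_set (in_nbhd G v - out_nbhd G v))))
     (bound_mset c (image_mset (wl c G l) (mset_set (out_nbhd G v - in_nbhd G v))))
     (bound_mset c (image_mset (wl c G l) (mset_set (nodes G - (nbhd G v \<union> {v})))))"

end

theory Submission imports Defs begin

lemma count_bound: "count (bound_mset c M) x = min c (count M x)"
proof -
  have "count (bound_mset c M) x = (\<Sum>y\<in>set_mset M. count (replicate_mset (min c (count M y)) y) x)"
    unfolding bound_mset_def by (simp add: count_sum)
  also have "\<dots> = (\<Sum>y\<in>set_mset M. if y = x then min c (count M x) else 0)"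
    by (rule sum.cong) auto
  also have "\<dots> = min c (count M x)"
    by (cases "x \<in># M") (auto simp: not_in_iff)
  finally show ?thesis .
qed

lemma count_image_mset_set:
  assumes "finite A"
  shows "count (image_mset f (mset_set A)) x = card {a\<in>A. f a = x}"
proof -
  have "count (image_mset f (mset_set A)) x = (\<Sum>y\<in>f -` {x} \<inter> A. 1)"
    using assms by (simp add: count_image_mset)
  also have "\<dots> = card (f -` {x} \<inter> A)" by simp
  also have "f -` {x} \<inter> A = {a\<in>A. f a = x}" by auto
  finally show ?thesis .
qed

lemma min_sum_bound:
  fixes g :: "'x \<Rightarrow> nat"
  assumes "finite S"
  shows "min c (sum g S) = min c (\<Sum>s\<in>S. min c (g s))"
  using assms
proof (induction S rule: finite_induct)
  case empty then show ?case by simp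
next
  case (insert s S)
  then show ?case by (simp add: min_def split: if_splits)
qed

lemma set_bound: assumes "c \<ge> 1" shows "set_mset (bound_mset c M) = set_mset M"
proof (rule set_eqI)
  fix x
  show "x \<in># bound_mset c M \<longleftrightarrow> x \<in># M"
    unfolding count_greater_zero_iff[symmetric] count_bound using assms by simp
qed

lemma region_count:
  fixes f :: "'a \<Rightarrow> 'c" and g :: "'b \<Rightarrow> 'c"
  assumes fA: "finite A" and fB: "finite B" and c: "c \<ge> 1"
    and eq: "bound_mset c (image_mset f (mset_set A)) = bound_mset c (image_mset g (mset_set B))"
    and PQ: "\<And>a b. a \<in> A \<Longrightarrow> b \<in> B \<Longrightarrow> f a = g b \<Longrightarrow> (P a \<longleftrightarrow> Q b)"
  shows "min c (card {a\<in>A. P a}) = min c (card {b\<in>B. Q b})"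
proof -
  have "set_mset (image_mset f (mset_set A)) = set_mset (image_mset g (mset_set B))"
    using eq set_bound[OF c] by metis
  hence img: "f ` A = g ` B" using fA fB by simp
  define S where "S = {col \<in> f ` A. \<exists>a\<in>A. f a = col \<and> P a}"
  have finS: "finite S" unfolding S_def using fA by auto
  have PS: "P a \<longleftrightarrow> f a \<in> S" if "a \<in> A" for a
  proof
    assume "P a" then show "f a \<in> S" using that unfolding S_def by auto
  next
    assume "f a \<in> S"
    then obtain a1 where a1: "a1 \<in> A" "f a1 = f a" "P a1" unfolding S_def by auto
    have "f a \<in> g ` B" using img that by blast
    then obtain b where b: "b \<in> B" "g b = f a" by (metis imageE)
    show "P a" using PQ[OF a1(1) b(1)] PQ[OF that b(1)] a1 b by auto
  qed
  have QS: "Q b \<longleftrightarrow> g b \<in> S" if "b \<in> B" for b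
  proof -
    have "g b \<in> f ` A" using img that by blast
    then obtain a where a: "a \<in> A" "f a = g b" by (metis imageE)
    show ?thesis using PQ[OF a(1) that a(2)] PS[OF a(1)] a by simp
  qed
  have cardA: "card {a\<in>A. P a} = (\<Sum>col\<in>S. card {a\<in>A. f a = col})"
  proof -
    have "{a\<in>A. P a} = (\<Union>col\<in>S. {a\<in>A. f a = col})" using PS by auto
    moreover have "card (\<Union>col\<in>S. {a\<in>A. f a = col}) = (\<Sum>col\<in>S. card {a\<in>A. f a = col})"
      by (rule card_UN_disjoint) (use finS fA in auto)
    ultimately show ?thesis by simp
  qed
  have cardB: "card {b\<in>B. Q b} = (\<Sum>col\<in>S. card {b\<in>B. g b = col})"
  proof -
    have "{b\<in>B. Q b} = (\<Union>col\<in>S. {b\<in>B. g b = col})" using QS by auto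
    moreover have "card (\<Union>col\<in>S. {b\<in>B. g b = col}) = (\<Sum>col\<in>S. card {b\<in>B. g b = col})"
      by (rule card_UN_disjoint) (use finS fB in auto)
    ultimately show ?thesis by simp
  qed
  have m: "min c (card {a\<in>A. f a = col}) = min c (card {b\<in>B. g b = col})" for col
    using arg_cong[OF eq, of "\<lambda>M. count M col"]
    by (simp add: count_bound count_image_mset_set fA fB)
  show ?thesis
    unfolding cardA cardB
    by (subst (1 2) min_sum_bound[OF finS]) (simp add: m)
qed


definition ntyp :: "'v digraph \<Rightarrow> 'v \<Rightarrow> 'v \<Rightarrow> bool \<times> bool \<times> bool" where
  "ntyp G p q = (p = q, (p, q) \<in> edges G, (q, p) \<in> edges G)"

lemma ntyp_swap: "ntyp G p q = ntyp H p' q' \<Longrightarrow> ntyp G q p = ntyp H q' p'"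
  by (auto simp: ntyp_def)

lemma nbhd_sub:
  assumes "digraph_dim d G"
  shows "in_nbhd G x \<subseteq> nodes G" "out_nbhd G x \<subseteq> nodes G" "x \<notin> in_nbhd G x" "x \<notin> out_nbhd G x"
  using assms by (auto simp: digraph_dim_def in_nbhd_def out_nbhd_def)

lemma card5:
  assumes "finite A" "finite B" "finite C" "finite D" "finite E"
    "A \<inter> B = {}" "A \<inter> C = {}" "A \<inter> D = {}" "A \<inter> E = {}"
    "B \<inter> C = {}" "B \<inter> D = {}" "B \<inter> E = {}"
    "C \<inter> D = {}" "C \<inter> E = {}" "D \<inter> E = {}"
  shows "card (A \<union> B \<union> C \<union> D \<union> E) = card A + card B + card C + card D + card E"
proof -
  have "card (A \<union> B \<union> C \<union> D \<union> E) = card (A \<union> B \<union> C \<union> D) + card E"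
    by (rule card_Un_disjoint) (use assms in auto)
  also have "card (A \<union> B \<union> C \<union> D) = card (A \<union> B \<union> C) + card D"
    by (rule card_Un_disjoint) (use assms in auto)
  also have "card (A \<union> B \<union> C) = card (A \<union> B) + card C"
    by (rule card_Un_disjoint) (use assms in auto)
  also have "card (A \<union> B) = card A + card B"
    by (rule card_Un_disjoint) (use assms in auto)
  finally show ?thesis .
qed

lemma decomp:
  assumes dG: "digraph_dim d G" and x: "x \<in> nodes G"
  shows "card {w\<in>nodes G. P w} = card {w\<in>{x}. P w}
     + card {w\<in>in_nbhd G x \<inter> out_nbhd G x. P w}
     + card {w\<in>in_nbhd G x - out_nbhd G x. P w}
     + card {w\<in>out_nbhd G x - in_nbhd G x. P w}
     + card {w\<in>nodes G - (nbhd G x \<union> {x}). P w}"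
proof -
  have fin: "finite (nodes G)" using dG by (simp add: digraph_dim_def)
  note ns = nbhd_sub[OF dG, of x]
  have fi: "finite (in_nbhd G x)" "finite (out_nbhd G x)" using ns fin finite_subset by blast+
  have eq: "{w\<in>nodes G. P w} = {w\<in>{x}. P w}
     \<union> {w\<in>in_nbhd G x \<inter> out_nbhd G x. P w}
     \<union> {w\<in>in_nbhd G x - out_nbhd G x. P w}
     \<union> {w\<in>out_nbhd G x - in_nbhd G x. P w}
     \<union> {w\<in>nodes G - (nbhd G x \<union> {x}). P w}"
    using ns x by (auto simp: nbhd_def)
  show ?thesis
    unfolding eq
    apply (rule card5)
    using fin fi ns by (auto simp: nbhd_def)
qed

lemma ntyp_regions:
  assumes dG: "digraph_dim d G" and "x \<in> nodes G"
  shows "ntyp G x x = (True, False, False)"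
    "w \<in> in_nbhd G x \<inter> out_nbhd G x \<Longrightarrow> ntyp G x w = (False, True, True)"
    "w \<in> in_nbhd G x - out_nbhd G x \<Longrightarrow> ntyp G x w = (False, False, True)"
    "w \<in> out_nbhd G x - in_nbhd G x \<Longrightarrow> ntyp G x w = (False, True, False)"
    "w \<in> nodes G - (nbhd G x \<union> {x}) \<Longrightarrow> ntyp G x w = (False, False, False)"
  using assms nbhd_sub[OF dG, of x]
  by (auto simp: ntyp_def digraph_dim_def in_nbhd_def out_nbhd_def nbhd_def)

lemma min_add_cong:
  fixes a b x y :: nat
  assumes "min c a = min c b"
  shows "min c (x + a + y) = min c (x + b + y)"
proof (cases "a < c")
  case True then have "a = b" using assms by (auto simp: min_def split: if_splits)
  then show ?thesis by simp
next
  case False then have "b \<ge> c" using assms by (auto simp: min_def split: if_splits)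
  then show ?thesis using False by simp
qed

lemma min_add4:
  fixes n a1 a2 a3 a4 b1 b2 b3 b4 :: nat
  assumes m1: "min c a1 = min c b1" and m2: "min c a2 = min c b2"
    and m3: "min c a3 = min c b3" and m4: "min c a4 = min c b4"
  shows "min c (n + a1 + a2 + a3 + a4) = min c (n + b1 + b2 + b3 + b4)"
proof -
  have "min c (n + a1 + a2 + a3 + a4) = min c (n + b1 + (a2 + a3 + a4))"
    using min_add_cong[OF m1, of n "a2+a3+a4"] by (simp add: add.assoc)
  also have "\<dots> = min c ((n + b1) + b2 + (a3 + a4))"
    using min_add_cong[OF m2, of "n+b1" "a3+a4"] by (simp add: add.assoc)
  also have "\<dots> = min c ((n + b1 + b2) + b3 + a4)"
    using min_add_cong[OF m3, of "n+b1+b2" a4] by (simp add: add.assoc)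
  also have "\<dots> = min c ((n + b1 + b2 + b3) + b4 + 0)"
    using min_add_cong[OF m4, of "n+b1+b2+b3" 0] by (simp add: add.assoc)
  finally show ?thesis by simp
qed

lemma count_lemma:
  assumes dG: "digraph_dim d G" and dH: "digraph_dim d H"
    and x: "x \<in> nodes G" and y: "y \<in> nodes H"
    and W: "wl c G (Suc l) x = wl c H (Suc l) y"
    and PQ: "\<And>w w'. w \<in> nodes G \<Longrightarrow> w' \<in> nodes H \<Longrightarrow> wl c G l w = wl c H l w'
                \<Longrightarrow> ntyp G x w = ntyp H y w' \<Longrightarrow> (P w \<longleftrightarrow> Q w')"
    and k: "k \<le> c"
  shows "k \<le> card {w\<in>nodes G. P w} \<longleftrightarrow> k \<le> card {w\<in>nodes H. Q w}"
proof (cases "c = 0")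
  case True then show ?thesis using k by simp
next
  case False
  hence c: "c \<ge> 1" by simp
  have finG: "finite (nodes G)" using dG by (simp add: digraph_dim_def)
  have finH: "finite (nodes H)" using dH by (simp add: digraph_dim_def)
  note nsG = nbhd_sub[OF dG, of x] and nsH = nbhd_sub[OF dH, of y]
  note tG = ntyp_regions[OF dG x] and tH = ntyp_regions[OF dH y]
  have W0: "wl c G l x = wl c H l y"
    and E1: "bound_mset c (image_mset (wl c G l) (mset_set (in_nbhd G x \<inter> out_nbhd G x)))
           = bound_mset c (image_mset (wl c H l) (mset_set (in_nbhd H y \<inter> out_nbhd H y)))"
    and E2: "bound_mset c (image_mset (wl c G l) (mset_set (in_nbhd G x - out_nbhd G x)))
           = bound_mset c (image_mset (wl c H l) (mset_set (in_nbhd H y - out_nbhd H y)))"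
    and E3: "bound_mset c (image_mset (wl c G l) (mset_set (out_nbhd G x - in_nbhd G x)))
           = bound_mset c (image_mset (wl c H l) (mset_set (out_nbhd H y - in_nbhd H y)))"
    and E4: "bound_mset c (image_mset (wl c G l) (mset_set (nodes G - (nbhd G x \<union> {x}))))
           = bound_mset c (image_mset (wl c H l) (mset_set (nodes H - (nbhd H y \<union> {y}))))"
    using W by simp_all
  have m0: "card {w\<in>{x}. P w} = card {w\<in>{y}. Q w}"
  proof -
    have "P x \<longleftrightarrow> Q y" using PQ[OF x y W0] tG(1) tH(1) by simp
    moreover have "{w\<in>{x}. P w} = (if P x then {x} else {})" "{w\<in>{y}. Q w} = (if Q y then {y} else {})"
      by auto
    ultimately show ?thesis by simp
  qed
  have m1: "min c (card {w\<in>in_nbhd G x \<inter> out_nbhd G x. P w}) = min c (card {w\<in>in_nbhd H y \<inter> out_nbhd H y. Q w})"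
    apply (rule region_count[OF _ _ c E1])
    subgoal using nsG finG finite_subset by blast
    subgoal using nsH finH finite_subset by blast
    subgoal for w w' by (rule PQ) (use nsG nsH tG(2)[of w] tH(2)[of w'] in auto)
    done
  have m2: "min c (card {w\<in>in_nbhd G x - out_nbhd G x. P w}) = min c (card {w\<in>in_nbhd H y - out_nbhd H y. Q w})"
    apply (rule region_count[OF _ _ c E2])
    subgoal using nsG finG finite_subset by blast
    subgoal using nsH finH finite_subset by blast
    subgoal for w w' by (rule PQ) (use nsG nsH tG(3)[of w] tH(3)[of w'] in auto)
    done
  have m3: "min c (card {w\<in>out_nbhd G x - in_nbhd G x. P w}) = min c (card {w\<in>out_nbhd H y - in_nbhd H y. Q w})"
    apply (rule region_count[OF _ _ c E3])
    subgoal using nsG finG finite_subset by blast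
    subgoal using nsH finH finite_subset by blast
    subgoal for w w' by (rule PQ) (use nsG nsH tG(4)[of w] tH(4)[of w'] in auto)
    done
  have m4: "min c (card {w\<in>nodes G - (nbhd G x \<union> {x}). P w}) = min c (card {w\<in>nodes H - (nbhd H y \<union> {y}). Q w})"
    apply (rule region_count[OF _ _ c E4])
    subgoal using finG by blast
    subgoal using finH by blast
    subgoal for w w' by (rule PQ) (use tG(5)[of w] tH(5)[of w'] in auto)
    done
  have "min c (card {w\<in>nodes G. P w}) = min c (card {w\<in>nodes H. Q w})"
    unfolding decomp[OF dG x] decomp[OF dH y] m0
    by (rule min_add4[OF m1 m2 m3 m4])
  then show ?thesis using k by (metis min.bounded_iff)
qed

lemma wl_lab: "wl c G l u = wl c H l v \<Longrightarrow> lab G u = lab H v"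
  by (induction l) auto

lemma fwd:
  assumes dG: "digraph_dim d G" and dH: "digraph_dim d H"
  shows "(\<forall>z. a z \<in> nodes G) \<Longrightarrow> (\<forall>z. b z \<in> nodes H) \<Longrightarrow> qdepth \<phi> \<le> l \<Longrightarrow> counts_le c \<phi>
    \<Longrightarrow> (\<forall>z. wl c G l (a z) = wl c H l (b z)) \<Longrightarrow> ntyp G (a X) (a Y) = ntyp H (b X) (b Y)
    \<Longrightarrow> sat G a \<phi> \<longleftrightarrow> sat H b \<phi>"
proof (induction \<phi> arbitrary: l a b)
  case (Pred i z)
  then show ?case using wl_lab by (metis sat.simps(1))
next
  case (Edge z1 z2)
  have nl: "(p, p) \<notin> edges G" "(q, q) \<notin> edges H" for p q using dG dH by (auto simp: digraph_dim_def)
  show ?case using Edge(6) nl by (cases z1; cases z2) (auto simp: ntyp_def)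
next
  case (Eq z1 z2)
  show ?case using Eq(6) by (cases z1; cases z2) (auto simp: ntyp_def)
next
  case (Neg \<phi>)
  then show ?case by simp
next
  case (Conj \<phi>1 \<phi>2)
  then show ?case by (metis counts_le.simps(3) max.bounded_iff qdepth.simps(5) sat.simps(5))
next
  case (ExC k z \<phi>)
  obtain l' where l: "l = Suc l'" and dl: "qdepth \<phi> \<le> l'" using ExC(4) by (cases l) auto
  have k: "k \<le> c" and cl: "counts_le c \<phi>" using ExC(5) by auto
  have W': "wl c G l' (a z) = wl c H l' (b z)" for z using ExC(6) l by simp
  show ?case
  proof (cases z)
    case X
    have "k \<le> card {w\<in>nodes G. sat G (a(X:=w)) \<phi>} \<longleftrightarrow> k \<le> card {w\<in>nodes H. sat H (b(X:=w)) \<phi>}"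
    proof (rule count_lemma[OF dG dH _ _ _ _ k])
      show "a Y \<in> nodes G" "b Y \<in> nodes H" using ExC(2,3) by auto
      show "wl c G (Suc l') (a Y) = wl c H (Suc l') (b Y)" using ExC(6) l by simp
      fix w w' assume w: "w \<in> nodes G" "w' \<in> nodes H" "wl c G l' w = wl c H l' w'"
        "ntyp G (a Y) w = ntyp H (b Y) w'"
      show "sat G (a(X:=w)) \<phi> \<longleftrightarrow> sat H (b(X:=w')) \<phi>"
      proof (rule ExC(1)[OF _ _ dl cl])
        show "\<forall>z. (a(X := w)) z \<in> nodes G" "\<forall>z. (b(X := w')) z \<in> nodes H" using ExC(2,3) w by auto
        show "\<forall>z. wl c G l' ((a(X := w)) z) = wl c H l' ((b(X := w')) z)" using W' w by auto
        show "ntyp G ((a(X := w)) X) ((a(X := w)) Y) = ntyp H ((b(X := w')) X) ((b(X := w')) Y)"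
          using ntyp_swap[OF w(4)] by simp
      qed
    qed
    then show ?thesis using X by simp
  next
    case Y
    have "k \<le> card {w\<in>nodes G. sat G (a(Y:=w)) \<phi>} \<longleftrightarrow> k \<le> card {w\<in>nodes H. sat H (b(Y:=w)) \<phi>}"
    proof (rule count_lemma[OF dG dH _ _ _ _ k])
      show "a X \<in> nodes G" "b X \<in> nodes H" using ExC(2,3) by auto
      show "wl c G (Suc l') (a X) = wl c H (Suc l') (b X)" using ExC(6) l by simp
      fix w w' assume w: "w \<in> nodes G" "w' \<in> nodes H" "wl c G l' w = wl c H l' w'"
        "ntyp G (a X) w = ntyp H (b X) w'"
      show "sat G (a(Y:=w)) \<phi> \<longleftrightarrow> sat H (b(Y:=w')) \<phi>"
      proof (rule ExC(1)[OF _ _ dl cl])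
        show "\<forall>z. (a(Y := w)) z \<in> nodes G" "\<forall>z. (b(Y := w')) z \<in> nodes H" using ExC(2,3) w by auto
        show "\<forall>z. wl c G l' ((a(Y := w)) z) = wl c H l' ((b(Y := w')) z)" using W' w by auto
        show "ntyp G ((a(Y := w)) X) ((a(Y := w)) Y) = ntyp H ((b(Y := w')) X) ((b(Y := w')) Y)"
          using w(4) by simp
      qed
    qed
    then show ?thesis using Y by simp
  qed
qed


section \<open>Characteristic formulas\<close>

definition TT :: "var \<Rightarrow> fo" where "TT z = Eq z z"
definition FF :: "var \<Rightarrow> fo" where "FF z = Neg (Eq z z)"

fun bigconj :: "var \<Rightarrow> fo list \<Rightarrow> fo" where
  "bigconj z [] = TT z"
| "bigconj z (\<phi> # \<phi>s) = Conj \<phi> (bigconj z \<phi>s)"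

definition bigdisj :: "var \<Rightarrow> fo list \<Rightarrow> fo" where
  "bigdisj z xs = Neg (bigconj z (map Neg xs))"

fun other :: "var \<Rightarrow> var" where
  "other X = Y" | "other Y = X"

lemma other_neq [simp]: "other z \<noteq> z" "z \<noteq> other z"
  by (cases z; simp)+

definition lst :: "'x multiset \<Rightarrow> 'x list" where
  "lst M = (SOME xs. mset xs = M)"

lemma set_lst [simp]: "set (lst M) = set_mset M"
proof -
  have "mset (lst M) = M" unfolding lst_def by (rule someI_ex) (rule ex_mset)
  then show ?thesis by (metis set_mset_mset)
qed

definition regF :: "nat \<Rightarrow> var \<Rightarrow> fo \<Rightarrow> color multiset \<Rightarrow> (color \<Rightarrow> fo) \<Rightarrow> fo" where
  "regF c z r M ch = (if c = 0 then (if M = {#} then TT z else FF z)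
     else if (\<forall>col\<in>#M. count M col \<le> c) then
       Conj (bigconj z (map (\<lambda>col. Conj (ExC (count M col) (other z) (Conj r (ch col)))
               (if count M col < c then Neg (ExC (Suc (count M col)) (other z) (Conj r (ch col))) else TT z))
             (lst M)))
         (Neg (ExC 1 (other z) (Conj r (Neg (bigdisj (other z) (map ch (lst M)))))))
     else FF z)"

definition rf1 :: "var \<Rightarrow> fo" where "rf1 z = Conj (Edge (other z) z) (Edge z (other z))"
definition rf2 :: "var \<Rightarrow> fo" where "rf2 z = Conj (Edge (other z) z) (Neg (Edge z (other z)))"
definition rf3 :: "var \<Rightarrow> fo" where "rf3 z = Conj (Neg (Edge (other z) z)) (Edge z (other z))"
definition rf4 :: "var \<Rightarrow> fo" where
  "rf4 z = Conj (Neg (Eq z (other z))) (Conj (Neg (Edge (other z) z)) (Neg (Edge z (other z))))"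

fun chr :: "nat \<Rightarrow> nat \<Rightarrow> nat \<Rightarrow> var \<Rightarrow> color \<Rightarrow> fo" where
  "chr d c 0 z col = (case col of
      Init bs \<Rightarrow> (if length bs = d then bigconj z (map (\<lambda>i. if bs ! i then Pred i z else Neg (Pred i z)) [0..<d])
                 else FF z)
    | Refine _ _ _ _ _ \<Rightarrow> FF z)"
| "chr d c (Suc l) z col = (case col of
      Init _ \<Rightarrow> FF z
    | Refine c0 M1 M2 M3 M4 \<Rightarrow>
        Conj (chr d c l z c0)
         (Conj (regF c z (rf1 z) M1 (chr d c l (other z)))
          (Conj (regF c z (rf2 z) M2 (chr d c l (other z)))
           (Conj (regF c z (rf3 z) M3 (chr d c l (other z)))
                 (regF c z (rf4 z) M4 (chr d c l (other z)))))))"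

definition good :: "nat \<Rightarrow> nat \<Rightarrow> nat \<Rightarrow> var set \<Rightarrow> fo \<Rightarrow> bool" where
  "good d c n S \<phi> \<longleftrightarrow> qdepth \<phi> \<le> n \<and> counts_le c \<phi> \<and> preds_lt d \<phi> \<and> free \<phi> \<subseteq> S"

lemma good_simps:
  "good d c n S (Conj \<phi> \<psi>) \<longleftrightarrow> good d c n S \<phi> \<and> good d c n S \<psi>"
  "good d c n S (Neg \<phi>) \<longleftrightarrow> good d c n S \<phi>"
  "z \<in> S \<Longrightarrow> good d c n S (TT z)"
  "z \<in> S \<Longrightarrow> good d c n S (FF z)"
  by (auto simp: good_def TT_def FF_def)

lemma good_ExC:
  "k \<le> c \<Longrightarrow> good d c n (insert z' S) \<phi> \<Longrightarrow> good d c (Suc n) S (ExC k z' \<phi>)"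
  by (auto simp: good_def)

lemma good_mono: "good d c n S \<phi> \<Longrightarrow> n \<le> m \<Longrightarrow> S \<subseteq> T \<Longrightarrow> good d c m T \<phi>"
  by (auto simp: good_def)

lemma good_bigconj: "z \<in> S \<Longrightarrow> (\<forall>\<phi>\<in>set xs. good d c n S \<phi>) \<Longrightarrow> good d c n S (bigconj z xs)"
  by (induction xs) (auto simp: good_simps)

lemma good_bigdisj: "z \<in> S \<Longrightarrow> (\<forall>\<phi>\<in>set xs. good d c n S \<phi>) \<Longrightarrow> good d c n S (bigdisj z xs)"
  unfolding bigdisj_def by (simp add: good_simps good_bigconj)

lemma good_rf: "good d c n {z, other z} (rf1 z)" "good d c n {z, other z} (rf2 z)"
  "good d c n {z, other z} (rf3 z)" "good d c n {z, other z} (rf4 z)"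
  by (auto simp: good_def rf1_def rf2_def rf3_def rf4_def)

lemma good_regF:
  assumes r: "good d c n {z, other z} r" and ch: "\<And>col. good d c n {other z} (ch col)"
  shows "good d c (Suc n) {z} (regF c z r M ch)"
proof -
  have ins: "insert (other z) {z} = {z, other z}" by auto
  have g1: "good d c n (insert (other z) {z}) (Conj r (ch col))" for col
    unfolding ins good_simps using r good_mono[OF ch[of col], of n] by auto
  have A: "good d c (Suc n) {z} (ExC k (other z) (Conj r (ch col)))" if "k \<le> c" for k col
    by (rule good_ExC[OF that g1])
  have B: "good d c (Suc n) {z} (Neg (ExC 1 (other z) (Conj r (Neg (bigdisj (other z) (map ch (lst M)))))))"
    if "c \<noteq> 0"
  proof -
    have "good d c n {z, other z} (bigdisj (other z) (map ch (lst M)))"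
      by (rule good_bigdisj) (use good_mono[OF ch] in auto)
    then have D: "good d c n (insert (other z) {z}) (Conj r (Neg (bigdisj (other z) (map ch (lst M)))))"
      using r by (simp add: good_simps ins)
    have "good d c (Suc n) {z} (ExC 1 (other z) (Conj r (Neg (bigdisj (other z) (map ch (lst M))))))"
      by (rule good_ExC[OF _ D]) (use that in simp)
    then show ?thesis by (simp add: good_simps)
  qed
  have C: "good d c (Suc n) {z} (bigconj z (map (\<lambda>col. Conj (ExC (count M col) (other z) (Conj r (ch col)))
               (if count M col < c then Neg (ExC (Suc (count M col)) (other z) (Conj r (ch col))) else TT z))
             (lst M)))" if "\<forall>col\<in>#M. count M col \<le> c"
    by (rule good_bigconj) (use that in \<open>auto simp: good_simps intro!: A\<close>)
  show ?thesis
    unfolding regF_def using B C by (simp add: good_simps)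
qed

lemma good_chr: "good d c l {z} (chr d c l z col)"
proof (induction l arbitrary: z col)
  case 0
  show ?case
    by (cases col) (auto simp: good_simps intro!: good_bigconj, auto simp: good_def)
next
  case (Suc l)
  have ch: "good d c l {other z} (chr d c l (other z) col)" for col
    using Suc[of "other z" col] by blast
  show ?case
  proof (cases col)
    case (Init bs) then show ?thesis by (simp add: good_simps)
  next
    case (Refine c0 M1 M2 M3 M4)
    have r: "good d c l {z, other z} (rfi z)" if "rfi \<in> {rf1, rf2, rf3, rf4}" for rfi
      using that good_rf by auto
    show ?thesis
      using Refine good_mono[OF Suc[of z c0]]
      by (simp add: good_simps good_regF good_rf ch)
  qed
qed


lemma sat_TT [simp]: "sat G a (TT z)" and sat_FF [simp]: "\<not> sat G a (FF z)"
  by (simp_all add: TT_def FF_def)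

lemma sat_bigconj: "sat G a (bigconj z xs) \<longleftrightarrow> (\<forall>\<phi>\<in>set xs. sat G a \<phi>)"
  by (induction xs) auto

lemma sat_bigdisj: "sat G a (bigdisj z xs) \<longleftrightarrow> (\<exists>\<phi>\<in>set xs. sat G a \<phi>)"
  by (simp add: bigdisj_def sat_bigconj)

lemma sat_bigconj_map: "sat G a (bigconj z (map f xs)) \<longleftrightarrow> (\<forall>x\<in>set xs. sat G a (f x))"
  by (induction xs) auto

lemma bound_char:
  assumes c: "c \<ge> 1" and g: "\<forall>col\<in>#M. count M col \<le> c"
  shows "bound_mset c N = M \<longleftrightarrow>
    (\<forall>col\<in>#M. count M col \<le> count N col \<and> (count M col < c \<longrightarrow> count N col \<le> count M col))
    \<and> (\<forall>col\<in>#N. col \<in># M)" (is "?L \<longleftrightarrow> ?R")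
proof
  assume e: "bound_mset c N = M"
  have cm: "count M col = min c (count N col)" for col using e count_bound by metis
  have 1: "\<forall>col\<in>#M. count M col \<le> count N col \<and> (count M col < c \<longrightarrow> count N col \<le> count M col)"
    using cm by auto
  have 2: "\<forall>col\<in>#N. col \<in># M"
  proof
    fix col assume "col \<in># N"
    then have "count N col > 0" by simp
    then have "count M col > 0" using cm[of col] c by simp
    then show "col \<in># M" by simp
  qed
  show ?R using 1 2 by blast
next
  assume h: "(\<forall>col\<in>#M. count M col \<le> count N col \<and> (count M col < c \<longrightarrow> count N col \<le> count M col))
    \<and> (\<forall>col\<in>#N. col \<in># M)"
  show "bound_mset c N = M"
    unfolding multiset_eq_iff count_bound
  proof
    fix col
    show "min c (count N col) = count M col"
    proof (cases "col \<in># M")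
      case True
      then have "count M col \<le> c" "count M col \<le> count N col"
        "count M col < c \<longrightarrow> count N col \<le> count M col" using h g by auto
      then show ?thesis by (cases "count M col < c") (auto simp: min_def)
    next
      case False
      then have "count N col = 0" using h by (meson count_inI)
      then show ?thesis using False by (simp add: not_in_iff)
    qed
  qed
qed

lemma regF_sat:
  assumes fin: "finite R" and RG: "R \<subseteq> nodes G"
    and rR: "\<And>w. w \<in> nodes G \<Longrightarrow> sat G (a(other z := w)) r \<longleftrightarrow> w \<in> R"
    and ch: "\<And>w col. w \<in> nodes G \<Longrightarrow> sat G (a(other z := w)) (ch col) \<longleftrightarrow> f w = col"
  shows "sat G a (regF c z r M ch) \<longleftrightarrow> bound_mset c (image_mset f (mset_set R)) = M"
proof -
  define N where "N = image_mset f (mset_set R)"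
  have cnt: "card {w\<in>nodes G. sat G (a(other z := w)) r \<and> sat G (a(other z := w)) (ch col)} = count N col" for col
  proof -
    have "{w\<in>nodes G. sat G (a(other z := w)) r \<and> sat G (a(other z := w)) (ch col)} = {w\<in>R. f w = col}"
      using rR ch RG by auto
    then show ?thesis unfolding N_def by (simp add: count_image_mset_set fin)
  qed
  have cntO: "(card {w\<in>nodes G. sat G (a(other z := w)) r \<and> \<not> sat G (a(other z := w)) (bigdisj (other z) (map ch (lst M)))} = 0)
     \<longleftrightarrow> (\<forall>col\<in>#N. col \<in># M)"
  proof -
    have "{w\<in>nodes G. sat G (a(other z := w)) r \<and> \<not> sat G (a(other z := w)) (bigdisj (other z) (map ch (lst M)))}
        = {w\<in>R. f w \<notin># M}"
      using rR ch RG by (auto simp: sat_bigdisj)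
    moreover have "finite {w\<in>R. f w \<notin># M}" using fin by simp
    ultimately show ?thesis unfolding N_def using fin by auto
  qed
  show ?thesis
  proof (cases "c = 0")
    case True
    have "bound_mset 0 N = {#}" by (simp add: multiset_eq_iff count_bound)
    then show ?thesis using True unfolding regF_def N_def[symmetric] by auto
  next
    case False
    show ?thesis
    proof (cases "\<forall>col\<in>#M. count M col \<le> c")
      case True
      have "sat G a (regF c z r M ch) \<longleftrightarrow>
        (\<forall>col\<in>#M. count M col \<le> count N col \<and> (count M col < c \<longrightarrow> count N col \<le> count M col))
        \<and> (\<forall>col\<in>#N. col \<in># M)"
        using False True unfolding regF_def
        by (simp add: sat_bigconj cnt cntO not_le Suc_le_eq) (auto simp: cnt not_le)
      then show ?thesis using bound_char[OF _ True] False N_def by auto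
    next
      case gf: False
      then obtain col where "col \<in># M" "count M col > c" by auto
      then have "bound_mset c N \<noteq> M" by (metis count_bound min.cobounded1 not_le)
      then show ?thesis using False gf unfolding regF_def N_def by auto
    qed
  qed
qed


lemma chr_sat:
  assumes dG: "digraph_dim d G"
  shows "a z \<in> nodes G \<Longrightarrow> sat G a (chr d c l z col) \<longleftrightarrow> wl c G l (a z) = col"
proof (induction l arbitrary: z col a)
  case 0
  have len: "length (lab G (a z)) = d" using dG 0 by (simp add: digraph_dim_def)
  show ?case
  proof (cases col)
    case (Init bs)
    show ?thesis
    proof (cases "length bs = d")
      case True
      have "chr d c 0 z col = bigconj z (map (\<lambda>i. if bs ! i then Pred i z else Neg (Pred i z)) [0..<d])"
        using Init True by simp
      then have "sat G a (chr d c 0 z col) \<longleftrightarrow>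
          (\<forall>i\<in>set [0..<d]. sat G a (if bs ! i then Pred i z else Neg (Pred i z)))"
        by (simp only: sat_bigconj_map)
      also have "\<dots> \<longleftrightarrow> (\<forall>i<d. lab G (a z) ! i = bs ! i)"
      proof -
        have "sat G a (if bs ! i then Pred i z else Neg (Pred i z)) \<longleftrightarrow> lab G (a z) ! i = bs ! i"
          if "i < d" for i using that len by (cases "bs ! i") auto
        then show ?thesis by auto
      qed
      also have "\<dots> \<longleftrightarrow> lab G (a z) = bs" using len True by (auto simp: list_eq_iff_nth_eq)
      finally show ?thesis using Init by simp
    next
      case False
      then show ?thesis using Init len by auto
    qed
  next
    case (Refine c0 M1 M2 M3 M4)
    then show ?thesis by simp
  qed
next
  case (Suc l)
  show ?case
  proof (cases col)
    case (Init bs) then show ?thesis by simp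
  next
    case (Refine c0 M1 M2 M3 M4)
    define u where "u = a z"
    have u: "u \<in> nodes G" using Suc.prems u_def by simp
    have fin: "finite (nodes G)" using dG by (simp add: digraph_dim_def)
    note ns = nbhd_sub[OF dG, of u]
    have az: "(a(other z := w)) z = u" for w using u_def by simp
    have ch: "sat G (a(other z := w)) (chr d c l (other z) col') \<longleftrightarrow> wl c G l w = col'"
      if "w \<in> nodes G" for w col'
      using Suc.IH[of "a(other z := w)" "other z" col'] that by (metis fun_upd_same)
    have fs: "finite (in_nbhd G u)" "finite (out_nbhd G u)" using ns fin finite_subset by blast+
    have R1: "sat G a (regF c z (rf1 z) M1 (chr d c l (other z))) \<longleftrightarrow>
      bound_mset c (image_mset (wl c G l) (mset_set (in_nbhd G u \<inter> out_nbhd G u))) = M1"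
      by (rule regF_sat) (use fs ns ch u_def in \<open>auto simp: rf1_def az in_nbhd_def out_nbhd_def\<close>)
    have R2: "sat G a (regF c z (rf2 z) M2 (chr d c l (other z))) \<longleftrightarrow>
      bound_mset c (image_mset (wl c G l) (mset_set (in_nbhd G u - out_nbhd G u))) = M2"
      by (rule regF_sat) (use fs ns ch u_def in \<open>auto simp: rf2_def az in_nbhd_def out_nbhd_def\<close>)
    have R3: "sat G a (regF c z (rf3 z) M3 (chr d c l (other z))) \<longleftrightarrow>
      bound_mset c (image_mset (wl c G l) (mset_set (out_nbhd G u - in_nbhd G u))) = M3"
      by (rule regF_sat) (use fs ns ch u_def in \<open>auto simp: rf3_def az in_nbhd_def out_nbhd_def\<close>)
    have R4: "sat G a (regF c z (rf4 z) M4 (chr d c l (other z))) \<longleftrightarrow>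
      bound_mset c (image_mset (wl c G l) (mset_set (nodes G - (nbhd G u \<union> {u})))) = M4"
      by (rule regF_sat) (use fin ch u_def in \<open>auto simp: rf4_def az in_nbhd_def out_nbhd_def nbhd_def\<close>)
    have R0: "sat G a (chr d c l z c0) \<longleftrightarrow> wl c G l u = c0"
      using Suc.IH[of a z c0] Suc.prems u_def by simp
    show ?thesis
      using Refine R0 R1 R2 R3 R4 u_def by simp
  qed
qed

theorem theorem1:
  fixes G :: "'a digraph" and H :: "'b digraph"
  assumes "digraph_dim d G" and "digraph_dim d H"
    and "u \<in> nodes G" and "v \<in> nodes H"
  shows "C2_equiv d l c G u H v \<longleftrightarrow> wl c G l u = wl c H l v"
proof
  assume e: "C2_equiv d l c G u H v"
  define \<phi> where "\<phi> = chr d c l X (wl c G l u)"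
  have g: "good d c l {X} \<phi>" unfolding \<phi>_def by (rule good_chr)
  then have "\<phi> \<in> C2 d l c" "free \<phi> \<subseteq> {X}" by (auto simp: good_def C2_def)
  then have "sat G (\<lambda>_. u) \<phi> \<longleftrightarrow> sat H (\<lambda>_. v) \<phi>" using e unfolding C2_equiv_def by blast
  moreover have "sat G (\<lambda>_. u) \<phi>" unfolding \<phi>_def using chr_sat[OF assms(1), of "\<lambda>_. u"] assms(3) by simp
  ultimately have "sat H (\<lambda>_. v) \<phi>" by simp
  then show "wl c G l u = wl c H l v" unfolding \<phi>_def using chr_sat[OF assms(2), of "\<lambda>_. v"] assms(4) by simp
next
  assume w: "wl c G l u = wl c H l v"
  show "C2_equiv d l c G u H v"
    unfolding C2_equiv_def
  proof (intro ballI impI)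
    fix \<phi> assume "\<phi> \<in> C2 d l c"
    then have "qdepth \<phi> \<le> l" "counts_le c \<phi>" by (auto simp: C2_def)
    moreover have "ntyp G u u = ntyp H v v" using assms(1,2) by (auto simp: ntyp_def digraph_dim_def)
    ultimately show "sat G (\<lambda>_. u) \<phi> \<longleftrightarrow> sat H (\<lambda>_. v) \<phi>"
      using fwd[OF assms(1,2), of "\<lambda>_. u" "\<lambda>_. v" \<phi> l c] assms(3,4) w by simp
  qed
qed

end
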